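(* Let $L$ be a principal element lattice and $n\ge1$. Then the following statements are equivalent: (1) Every proper element of $L$ is a quasi $n$-absorbing element of $L$. (2) For every $a,b\in L_*$, $a^n=ca^nb$ for some $c\in L$ or $a^{n-1}b=da^nb$ for some $d\in L$. (3) For all $a_1,a_2,\dots,a_{n+1}\in L_*$, $(a_1\wedge a_2\wedge\cdots\wedge a_n)^n\le c\,a_1a_2\cdots a_{n+1}$ for some $c\in L$ or $(a_1\wedge a_2\wedge\cdots\wedge a_n)^{n-1}a_{n+1}\le d\,a_1a_2\cdots a_{n+1}$ for some $d\in L$.
   Context: A multiplicative lattice is a complete lattice $L$ with least element $0$ and compact greatest element $1$, equipped with a commutative, associative product that distributes over arbitrary joins and has $1$ as multiplicative identity. An element $a$ is compact if $a\le\bigvee_{\alpha\in I}a_\alpha$ implies $a\le\bigvee_{\alpha\in I_0}a_\alpha$ for some finite $I_0\subseteq I$; $L_*$ denotes the set of compact elements. For $x,y\in L$, $(x:y)=\bigvee\{z: zy\le x\}$. An element $e$ is principal if $a\wedge be=((a:e)\wedge b)e$ and $(ae\vee b):e=(b:e)\vee a$ for all $a,b\in L$; a principal element lattice is a multiplicative lattice in which every element is principal. $a^0=1$. A proper element $q$ ($q<1$) is quasi $n$-absorbing if whenever $a^nb\le q$ for some $a,b\in L_*$, then $a^n\le q$ or $a^{n-1}b\le q$. *)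

theory Defs
  imports Main
begin

text \<open>A multiplicative lattice: the complete lattice structure is the type class
  complete_lattice (0 = bot, 1 = top); the product is an explicit operation m.\<close>

definition lcompact :: "'a::complete_lattice \<Rightarrow> bool" where
  "lcompact a \<longleftrightarrow> (\<forall>S. a \<le> Sup S \<longrightarrow> (\<exists>T. T \<subseteq> S \<and> finite T \<and> a \<le> Sup T))"

definition mult_lattice :: "('a::complete_lattice \<Rightarrow> 'a \<Rightarrow> 'a) \<Rightarrow> bool" where
  "mult_lattice m \<longleftrightarrow>
     lcompact (top::'a)
   \<and> (\<forall>a b. m a b = m b a)
   \<and> (\<forall>a b c. m (m a b) c = m a (m b c))
   \<and> (\<forall>a S. m a (Sup S) = Sup (m a ` S))
   \<and> (\<forall>a. m a top = a)"

definition lres :: "('a::complete_lattice \<Rightarrow> 'a \<Rightarrow> 'a) \<Rightarrow> 'a \<Rightarrow> 'a \<Rightarrow> 'a" where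
  "lres m x y = Sup {z. m z y \<le> x}"

definition principal_el :: "('a::complete_lattice \<Rightarrow> 'a \<Rightarrow> 'a) \<Rightarrow> 'a \<Rightarrow> bool" where
  "principal_el m e \<longleftrightarrow>
     (\<forall>a b. inf a (m b e) = m (inf (lres m a e) b) e
          \<and> lres m (sup (m a e) b) e = sup (lres m b e) a)"

definition principal_element_lattice :: "('a::complete_lattice \<Rightarrow> 'a \<Rightarrow> 'a) \<Rightarrow> bool" where
  "principal_element_lattice m \<longleftrightarrow> mult_lattice m \<and> (\<forall>e. principal_el m e)"

primrec lpow :: "('a::complete_lattice \<Rightarrow> 'a \<Rightarrow> 'a) \<Rightarrow> 'a \<Rightarrow> nat \<Rightarrow> 'a" where
  "lpow m a 0 = top"
| "lpow m a (Suc k) = m a (lpow m a k)"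

definition lprod :: "('a::complete_lattice \<Rightarrow> 'a \<Rightarrow> 'a) \<Rightarrow> 'a list \<Rightarrow> 'a" where
  "lprod m xs = foldr m xs top"

definition quasi_n_absorbing :: "('a::complete_lattice \<Rightarrow> 'a \<Rightarrow> 'a) \<Rightarrow> nat \<Rightarrow> 'a \<Rightarrow> bool" where
  "quasi_n_absorbing m n q \<longleftrightarrow> q < top \<and>
     (\<forall>a b. lcompact a \<longrightarrow> lcompact b \<longrightarrow> m (lpow m a n) b \<le> q \<longrightarrow>
        lpow m a n \<le> q \<or> m (lpow m a (n - 1)) b \<le> q)"

end

theory Submission
  imports Defs
begin

context fixes m :: "'a::complete_lattice \<Rightarrow> 'a \<Rightarrow> 'a"
begin

lemma ml_comm: "mult_lattice m \<Longrightarrow> m a b = m b a"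
  unfolding mult_lattice_def by blast
lemma ml_assoc: "mult_lattice m \<Longrightarrow> m (m a b) c = m a (m b c)"
  unfolding mult_lattice_def by blast
lemma ml_Sup: "mult_lattice m \<Longrightarrow> m a (Sup S) = Sup (m a ` S)"
  unfolding mult_lattice_def by blast
lemma ml_top: "mult_lattice m \<Longrightarrow> m a top = a"
  unfolding mult_lattice_def by blast
lemma ml_top2: "mult_lattice m \<Longrightarrow> m top a = a"
  using ml_comm[of a top] ml_top[of a] by simp
lemma ml_topc: "mult_lattice m \<Longrightarrow> lcompact (top::'a::complete_lattice)"
  unfolding mult_lattice_def by blast

lemma ml_sup: "mult_lattice m \<Longrightarrow> m a (sup x y) = sup (m a x) (m a y)"
  using ml_Sup[of a "{x,y}"] by simp

lemma ml_mono: "mult_lattice m \<Longrightarrow> x \<le> y \<Longrightarrow> m c x \<le> m c y"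
  using ml_sup[of c x y] by (metis le_iff_sup)

lemma ml_mono2: "mult_lattice m \<Longrightarrow> x \<le> y \<Longrightarrow> c \<le> d \<Longrightarrow> m c x \<le> m d y"
proof -
  assume ml: "mult_lattice m" and h: "x \<le> y" "c \<le> d"
  have "m c x \<le> m c y" by (rule ml_mono[OF ml h(1)])
  also have "\<dots> = m y c" by (rule ml_comm[OF ml])
  also have "\<dots> \<le> m y d" by (rule ml_mono[OF ml h(2)])
  also have "\<dots> = m d y" by (rule ml_comm[OF ml])
  finally show ?thesis .
qed

lemma ml_le: "mult_lattice m \<Longrightarrow> m c x \<le> x"
  by (metis ml_mono2 ml_top2 order_refl top_greatest)

lemma lres_le: "mult_lattice m \<Longrightarrow> m (lres m x y) y \<le> x"
proof -
  assume ml: "mult_lattice m"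
  have "m (lres m x y) y = m y (Sup {z. m z y \<le> x})" unfolding lres_def by (rule ml_comm[OF ml])
  also have "\<dots> = Sup ((m y) ` {z. m z y \<le> x})" by (rule ml_Sup[OF ml])
  also have "\<dots> \<le> x"
  proof (rule Sup_least)
    fix w assume "w \<in> m y ` {z. m z y \<le> x}"
    then obtain z where "m z y \<le> x" "w = m y z" by auto
    then show "w \<le> x" using ml_comm[OF ml, of y z] by simp
  qed
  finally show ?thesis .
qed

lemma pel_ml: "principal_element_lattice m \<Longrightarrow> mult_lattice m"
  unfolding principal_element_lattice_def by blast

lemma below_eq: "principal_element_lattice m \<Longrightarrow> x \<le> e \<Longrightarrow> x = m (lres m x e) e"
proof -
  assume p: "principal_element_lattice m" and le: "x \<le> e"
  have ml: "mult_lattice m" using p pel_ml by blast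
  have "principal_el m e" using p unfolding principal_element_lattice_def by blast
  then have "inf x (m top e) = m (inf (lres m x e) top) e" unfolding principal_el_def by blast
  then show ?thesis using le ml ml_top2 by (simp add: inf_absorb1)
qed

lemma all_compact:
  assumes p: "principal_element_lattice m"
  shows "lcompact (x::'a::complete_lattice)"
  unfolding lcompact_def
proof (intro allI impI)
  fix S :: "'a set" assume xs: "x \<le> Sup S"
  have ml: "mult_lattice m" using p pel_ml by blast
  define y where "y = Sup S"
  define f where "f = (\<lambda>s. lres m s y)"
  define c where "c = Sup (f ` S)"
  have sy: "m (f s) y = s" if "s \<in> S" for s
  proof -
    have "s \<le> y" unfolding y_def using that by (rule Sup_upper)
    then show ?thesis unfolding f_def by (rule below_eq[OF p, symmetric])
  qed
  have "m c y = m y c" by (rule ml_comm[OF ml])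
  also have "\<dots> = Sup ((m y) ` f ` S)" unfolding c_def by (rule ml_Sup[OF ml])
  also have "\<dots> = Sup ((\<lambda>s. m (f s) y) ` S)"
    unfolding image_image by (simp add: ml_comm[OF ml, of y "f _"])
  also have "\<dots> = y" using sy unfolding y_def by simp
  finally have cy: "m c y = y" .
  have "principal_el m y" using p unfolding principal_element_lattice_def by blast
  then have "lres m (sup (m c y) bot) y = sup (lres m bot y) c" unfolding principal_el_def by blast
  then have e1: "lres m y y = sup (lres m bot y) c" using cy by simp
  have "m top y \<le> y" using ml_top2[OF ml] by simp
  then have "top \<le> lres m y y" unfolding lres_def by (simp add: Sup_upper)
  then have "lres m y y = top" by (rule top.extremum_uniqueI)
  then have "top \<le> Sup (insert (lres m bot y) (f ` S))" using e1 c_def by simp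
  then obtain T where T: "T \<subseteq> insert (lres m bot y) (f ` S)" "finite T" "top \<le> Sup T"
    using ml_topc[OF ml] unfolding lcompact_def by blast
  have "T - {lres m bot y} \<subseteq> f ` S" using T(1) by blast
  then obtain S0 where S0: "S0 \<subseteq> S" "finite S0" "T - {lres m bot y} = f ` S0"
    using T(2) by (meson finite_Diff finite_subset_image)
  have "Sup T \<le> sup (lres m bot y) (Sup (f ` S0))"
    using S0(3) by (metis Sup_insert Sup_subset_mono insert_Diff_single subset_insertI)
  then have t: "top \<le> sup (lres m bot y) (Sup (f ` S0))" using T(3) by simp
  have "y = m top y" using ml_top2[OF ml] by simp
  also have "\<dots> \<le> m (sup (lres m bot y) (Sup (f ` S0))) y"
    by (rule ml_mono2[OF ml order_refl t])
  also have "\<dots> = sup (m (lres m bot y) y) (m (Sup (f ` S0)) y)"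
    using ml_sup[OF ml, of y "lres m bot y" "Sup (f ` S0)"]
      ml_comm[OF ml, of y "sup (lres m bot y) (Sup (f ` S0))"]
      ml_comm[OF ml, of y "lres m bot y"] ml_comm[OF ml, of y "Sup (f ` S0)"] by simp
  also have "m (Sup (f ` S0)) y = Sup ((\<lambda>s. m (f s) y) ` S0)"
  proof -
    have "m (Sup (f ` S0)) y = m y (Sup (f ` S0))" by (rule ml_comm[OF ml])
    also have "\<dots> = Sup (m y ` f ` S0)" by (rule ml_Sup[OF ml])
    also have "\<dots> = Sup ((\<lambda>s. m (f s) y) ` S0)" unfolding image_image
      by (simp add: ml_comm[OF ml, of y "f _"])
    finally show ?thesis .
  qed
  also have "\<dots> = Sup S0" using sy S0(1) by (simp add: subset_iff)
  also have "m (lres m bot y) y = bot" using lres_le[OF ml, of bot y] by (rule bot.extremum_uniqueI)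
  finally have "y \<le> Sup S0" by simp
  then show "\<exists>T\<subseteq>S. finite T \<and> x \<le> Sup T" using xs S0 y_def by auto
qed

lemma foldr_eq: "mult_lattice m \<Longrightarrow> foldr m xs y = m (lprod m xs) y"
  unfolding lprod_def
  by (induction xs) (auto simp: ml_top2 ml_assoc)

lemma lprod_snoc: assumes ml: "mult_lattice m" shows "lprod m (xs @ [y]) = m (lprod m xs) y"
proof -
  have "lprod m (xs @ [y]) = foldr m xs y" by (simp add: lprod_def ml_top[OF ml])
  then show ?thesis using foldr_eq[OF ml, of xs y] by simp
qed

lemma lprod_ge: "mult_lattice m \<Longrightarrow> (\<forall>i\<in>{j..<j+k}. x \<le> a i) \<Longrightarrow> lpow m x k \<le> lprod m (map a [j..<j+k])"
proof (induction k arbitrary: j)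
  case 0 then show ?case by (simp add: lprod_def)
next
  case (Suc k)
  have "[j..<j+Suc k] = j # [Suc j..<Suc j + k]" by (simp add: upt_rec)
  moreover have "lpow m x k \<le> lprod m (map a [Suc j..<Suc j + k])"
    apply (rule Suc.IH) using Suc.prems by auto
  moreover have "x \<le> a j" using Suc by auto
  ultimately show ?case using Suc(2) ml_mono2[OF Suc(2)] by (simp only: lprod_def list.map foldr.simps o_def lpow.simps)
qed

lemma lprod_rep: "lprod m (replicate k x) = lpow m x k"
  by (induction k) (auto simp: lprod_def)

end

theorem mainTheorem11:
  fixes m :: "'a::complete_lattice \<Rightarrow> 'a \<Rightarrow> 'a" and n :: nat
  assumes "principal_element_lattice m" and "n \<ge> 1"
  shows "((\<forall>q. q < top \<longrightarrow> quasi_n_absorbing m n q)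
          \<longleftrightarrow> (\<forall>a b. lcompact a \<longrightarrow> lcompact b \<longrightarrow>
                (\<exists>c. lpow m a n = m c (m (lpow m a n) b))
              \<or> (\<exists>d. m (lpow m a (n - 1)) b = m d (m (lpow m a n) b))))
       \<and> ((\<forall>q. q < top \<longrightarrow> quasi_n_absorbing m n q)
          \<longleftrightarrow> (\<forall>a :: nat \<Rightarrow> 'a. (\<forall>i\<in>{1..n+1}. lcompact (a i)) \<longrightarrow>
                (\<exists>c. lpow m (Inf (a ` {1..n})) n \<le> m c (lprod m (map a [1..<n+2])))
              \<or> (\<exists>d. m (lpow m (Inf (a ` {1..n})) (n - 1)) (a (n+1))
                      \<le> m d (lprod m (map a [1..<n+2])))))"
proof -
  note p = assms(1)
  have ml: "mult_lattice m" using p pel_ml by blast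
  have comp: "\<And>x::'a. lcompact x" using all_compact[OF p] .
  let ?Q = "\<forall>q. q < top \<longrightarrow> quasi_n_absorbing m n q"
  have A: "?Q \<longleftrightarrow> (\<forall>a b. lcompact a \<longrightarrow> lcompact b \<longrightarrow>
                (\<exists>c. lpow m a n = m c (m (lpow m a n) b))
              \<or> (\<exists>d. m (lpow m a (n - 1)) b = m d (m (lpow m a n) b)))"
  proof
    assume Q: ?Q
    show "\<forall>a b. lcompact a \<longrightarrow> lcompact b \<longrightarrow>
                (\<exists>c. lpow m a n = m c (m (lpow m a n) b))
              \<or> (\<exists>d. m (lpow m a (n - 1)) b = m d (m (lpow m a n) b))"
    proof (intro allI impI)
      fix a b :: 'a
      let ?e = "m (lpow m a n) b"
      show "(\<exists>c. lpow m a n = m c ?e) \<or> (\<exists>d. m (lpow m a (n - 1)) b = m d ?e)"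
      proof (cases "?e = top")
        case True then show ?thesis using ml ml_top by metis
      next
        case False
        then have "quasi_n_absorbing m n ?e" using Q top.not_eq_extremum by blast
        then have "lpow m a n \<le> ?e \<or> m (lpow m a (n - 1)) b \<le> ?e"
          unfolding quasi_n_absorbing_def using comp by blast
        then show ?thesis using below_eq[OF p] by blast
      qed
    qed
  next
    assume H: "\<forall>a b. lcompact a \<longrightarrow> lcompact b \<longrightarrow>
                (\<exists>c. lpow m a n = m c (m (lpow m a n) b))
              \<or> (\<exists>d. m (lpow m a (n - 1)) b = m d (m (lpow m a n) b))"
    show ?Q unfolding quasi_n_absorbing_def
    proof (intro allI impI conjI)
      fix q a b :: 'a
      assume "lcompact a" "lcompact b" and le: "m (lpow m a n) b \<le> q"
      then have "(\<exists>c. lpow m a n = m c (m (lpow m a n) b))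
              \<or> (\<exists>d. m (lpow m a (n - 1)) b = m d (m (lpow m a n) b))" using H by blast
      then show "lpow m a n \<le> q \<or> m (lpow m a (n - 1)) b \<le> q"
        using le ml_le[OF ml] order_trans by metis
    qed
  qed
  have B: "?Q \<longleftrightarrow> (\<forall>a :: nat \<Rightarrow> 'a. (\<forall>i\<in>{1..n+1}. lcompact (a i)) \<longrightarrow>
                (\<exists>c. lpow m (Inf (a ` {1..n})) n \<le> m c (lprod m (map a [1..<n+2])))
              \<or> (\<exists>d. m (lpow m (Inf (a ` {1..n})) (n - 1)) (a (n+1))
                      \<le> m d (lprod m (map a [1..<n+2]))))"
  proof
    assume Q: ?Q
    show "\<forall>a :: nat \<Rightarrow> 'a. (\<forall>i\<in>{1..n+1}. lcompact (a i)) \<longrightarrow>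
                (\<exists>c. lpow m (Inf (a ` {1..n})) n \<le> m c (lprod m (map a [1..<n+2])))
              \<or> (\<exists>d. m (lpow m (Inf (a ` {1..n})) (n - 1)) (a (n+1))
                      \<le> m d (lprod m (map a [1..<n+2])))"
    proof (intro allI impI)
      fix a :: "nat \<Rightarrow> 'a"
      let ?x = "Inf (a ` {1..n})"
      let ?P = "lprod m (map a [1..<n+2])"
      have split: "[1..<n+2] = [1..<1+n] @ [n+1]" by simp
      have P: "?P = m (lprod m (map a [1..<1+n])) (a (n+1))"
        unfolding split by (simp add: lprod_snoc[OF ml])
      have "lpow m ?x n \<le> lprod m (map a [1..<1+n])"
        by (rule lprod_ge[OF ml]) (auto intro: Inf_lower)
      then have le: "m (lpow m ?x n) (a (n+1)) \<le> ?P" using P ml ml_mono2 by (metis order_refl ml_comm)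
      have tP: "\<And>z. z \<le> m top ?P \<Longrightarrow> z \<le> ?P" using ml ml_top2 by metis
      show "(\<exists>c. lpow m ?x n \<le> m c ?P) \<or> (\<exists>d. m (lpow m ?x (n - 1)) (a (n+1)) \<le> m d ?P)"
      proof (cases "?P = top")
        case True then show ?thesis using ml ml_top by (metis top_greatest)
      next
        case False
        then have "quasi_n_absorbing m n ?P" using Q top.not_eq_extremum by blast
        then have "lpow m ?x n \<le> ?P \<or> m (lpow m ?x (n - 1)) (a (n+1)) \<le> ?P"
          unfolding quasi_n_absorbing_def using comp le by blast
        then show ?thesis using ml ml_top2 by metis
      qed
    qed
  next
    assume H: "\<forall>a :: nat \<Rightarrow> 'a. (\<forall>i\<in>{1..n+1}. lcompact (a i)) \<longrightarrow>
                (\<exists>c. lpow m (Inf (a ` {1..n})) n \<le> m c (lprod m (map a [1..<n+2])))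
              \<or> (\<exists>d. m (lpow m (Inf (a ` {1..n})) (n - 1)) (a (n+1))
                      \<le> m d (lprod m (map a [1..<n+2])))"
    show ?Q unfolding quasi_n_absorbing_def
    proof (intro allI impI conjI)
      fix q a b :: 'a
      assume "lcompact a" "lcompact b" and le: "m (lpow m a n) b \<le> q"
      define f where "f = (\<lambda>i::nat. if i \<le> n then a else b)"
      have img: "f ` {1..n} = {a}" using assms(2) unfolding f_def by auto
      have split: "[1..<n+2] = [1..<1+n] @ [n+1]" by simp
      have rep: "map f [1..<1+n] = replicate n a"
      proof -
        have "map f [1..<1+n] = map (\<lambda>_. a) [1..<1+n]" by (rule map_cong) (auto simp: f_def)
        then show ?thesis by (simp add: map_replicate_const)
      qed
      have P: "lprod m (map f [1..<n+2]) = m (lpow m a n) b"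
      proof -
        have "map f [1..<n+2] = replicate n a @ [b]" unfolding split using rep by (simp add: f_def)
        then show ?thesis by (simp add: lprod_snoc[OF ml] lprod_rep)
      qed
      have "(\<exists>c. lpow m a n \<le> m c (m (lpow m a n) b))
              \<or> (\<exists>d. m (lpow m a (n - 1)) b \<le> m d (m (lpow m a n) b))"
        using H[rule_format, of f] comp img P by (simp add: f_def)
      then show "lpow m a n \<le> q \<or> m (lpow m a (n - 1)) b \<le> q"
        using le ml_le[OF ml] order_trans by metis
    qed
  qed
  show ?thesis using A B by blast
qed

end
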